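(* Let $d\ge 1$, let $\mathcal A=\{A_n:n\ge2\}$ be the family defined below, and let $\mathcal B$ be any family of bounded convex sets in $\mathbb R^{d+1}$ each of which contains the cube $C=\{x\in\mathbb R^{d+1}: x_1=0,\ 0\le x_i\le 1 \text{ for } i=2,\dots,d+1\}$. Then $\mathcal F=\mathcal A\cup\mathcal B$ satisfies the $(d+1+2k,\,d+1+k)$-property for every integer $k\ge0$.
   Context: Let $e_1,\dots,e_{d+1}$ be the standard basis of $\mathbb R^{d+1}$. For $0\le\alpha\le1$, let $S_\alpha\subset\operatorname{span}(e_2,\dots,e_{d+1})$ be the $(d-1)$-dimensional simplex with vertices $e_2+\dots+e_k+\alpha e_{k+1}$ for $k=1,\dots,d$. For each integer $n\ge2$ let $I_n=\{te_1:t\ge n\}$ and $A_n=\operatorname{conv}(S_{1/n}\cup I_n)$. A family of at least $p$ sets satisfies the $(p,q)$-property if among any $p$ of its members there are $q$ with a common point. *)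

theory Defs
  imports "HOL-Analysis.Analysis"
begin

text \<open>Coordinates of R^(d+1) are modelled by the index type 'n together with a
  labelling b, a bijection from {1..d+1} onto the index type; e b k is the
  k-th standard basis vector.\<close>

definition ebas :: "(nat \<Rightarrow> 'n::finite) \<Rightarrow> nat \<Rightarrow> real ^ 'n" where
  "ebas b k = axis (b k) 1"

definition Ssimp :: "(nat \<Rightarrow> 'n::finite) \<Rightarrow> nat \<Rightarrow> real \<Rightarrow> (real ^ 'n) set" where
  "Ssimp b d \<alpha> = convex hull
     {(\<Sum>i\<in>{2..k}. ebas b i) + \<alpha> *\<^sub>R ebas b (k + 1) | k. 1 \<le> k \<and> k \<le> d}"

definition Iray :: "(nat \<Rightarrow> 'n::finite) \<Rightarrow> nat \<Rightarrow> (real ^ 'n) set" where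
  "Iray b n = {t *\<^sub>R ebas b 1 | t. t \<ge> real n}"

definition Aset :: "(nat \<Rightarrow> 'n::finite) \<Rightarrow> nat \<Rightarrow> nat \<Rightarrow> (real ^ 'n) set" where
  "Aset b d n = convex hull (Ssimp b d (1 / real n) \<union> Iray b n)"

definition Afam :: "(nat \<Rightarrow> 'n::finite) \<Rightarrow> nat \<Rightarrow> (real ^ 'n) set set" where
  "Afam b d = {Aset b d n | n. n \<ge> 2}"

definition cube :: "(nat \<Rightarrow> 'n::finite) \<Rightarrow> nat \<Rightarrow> (real ^ 'n) set" where
  "cube b d = {x. x $ b 1 = 0 \<and> (\<forall>i\<in>{2..d+1}. 0 \<le> x $ b i \<and> x $ b i \<le> 1)}"

definition pq_property :: "nat \<Rightarrow> nat \<Rightarrow> 'a set set \<Rightarrow> bool" where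
  "pq_property p q F \<longleftrightarrow>
     (\<exists>G\<subseteq>F. finite G \<and> card G = p) \<and>
     (\<forall>G\<subseteq>F. finite G \<and> card G = p \<longrightarrow>
        (\<exists>H\<subseteq>G. card H = q \<and> \<Inter>H \<noteq> {}))"

end

theory Submission imports Defs begin

fun tp :: "real list \<Rightarrow> nat \<Rightarrow> real" where
  "tp [] j = (if j = 0 then 1 else 0)"
| "tp (a#as) 0 = 1"
| "tp (a#as) (Suc j) = a * tp as j + (1-a) * tp as (Suc j)"

lemma tp0[simp]: "tp xs 0 = 1" by (cases xs) auto

lemma tp_big: "length xs < j \<Longrightarrow> tp xs j = 0"
proof (induction xs arbitrary: j)
  case Nil then show ?case by simp
next
  case (Cons a as) then obtain j' where "j = Suc j'" by (cases j) auto
  with Cons show ?case by simp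
qed

lemma tp_bounds: "\<forall>a\<in>set xs. 0 \<le> a \<and> a \<le> 1 \<Longrightarrow> 0 \<le> tp xs j \<and> tp xs j \<le> 1"
proof (induction xs arbitrary: j)
  case Nil then show ?case by simp
next
  case (Cons a as)
  show ?case
  proof (cases j)
    case 0 then show ?thesis by simp
  next
    case (Suc j')
    have a: "0 \<le> a" "a \<le> 1" using Cons.prems by auto
    have h1: "0 \<le> tp as j'" "tp as j' \<le> 1" "0 \<le> tp as (Suc j')" "tp as (Suc j') \<le> 1"
      using Cons by auto
    have "a * tp as j' + (1-a) * tp as (Suc j') \<le> a * 1 + (1-a) * 1"
      by (intro add_mono mult_left_mono) (use a h1 in auto)
    moreover have "0 \<le> a * tp as j' + (1-a) * tp as (Suc j')" using a h1 by simp
    ultimately show ?thesis using Suc by simp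
  qed
qed

lemma tp_mono: "\<forall>a\<in>set xs. 0 \<le> a \<and> a \<le> 1 \<Longrightarrow> tp xs (Suc j) \<le> tp xs j"
proof (induction xs arbitrary: j)
  case Nil then show ?case by simp
next
  case (Cons a as)
  have a: "0 \<le> a" "a \<le> 1" using Cons.prems by auto
  show ?case
  proof (cases j)
    case 0 then show ?thesis using tp_bounds[OF Cons.prems] by (metis tp0)
  next
    case (Suc j')
    have "a * tp as (Suc j') + (1-a) * tp as (Suc (Suc j')) \<le> a * tp as j' + (1-a) * tp as (Suc j')"
      by (intro add_mono mult_left_mono) (use a Cons in auto)
    then show ?thesis using Suc by simp
  qed
qed

lemma tp_remove: "x \<in> set xs \<Longrightarrow>
  tp xs (Suc j) = x * tp (remove1 x xs) j + (1-x) * tp (remove1 x xs) (Suc j)"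
proof (induction xs arbitrary: j)
  case Nil then show ?case by simp
next
  case (Cons a as)
  show ?case
  proof (cases "x = a")
    case True then show ?thesis by simp
  next
    case False
    then have x: "x \<in> set as" using Cons.prems by simp
    let ?r = "remove1 x as"
    have r: "remove1 x (a#as) = a # ?r" using False by simp
    show ?thesis
    proof (cases j)
      case 0
      have e: "tp as (Suc 0) = x + (1-x) * tp ?r (Suc 0)" using Cons.IH[OF x, of 0] by simp
      show ?thesis unfolding r 0 by (simp add: e algebra_simps)
    next
      case (Suc j')
      have e1: "tp as (Suc j') = x * tp ?r j' + (1-x) * tp ?r (Suc j')" using Cons.IH[OF x, of j'] .
      have e2: "tp as (Suc (Suc j')) = x * tp ?r (Suc j') + (1-x) * tp ?r (Suc (Suc j'))"
        using Cons.IH[OF x, of "Suc j'"] .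
      show ?thesis unfolding r Suc by (simp only: tp.simps e1 e2) (simp add: algebra_simps)
    qed
  qed
qed

lemma tele: fixes g :: "nat \<Rightarrow> real"
  assumes "j \<le> d"
  shows "(\<Sum>k\<in>{1..d}. (g (k-1) - g k) * (if j+1 \<le> k then 1 else 0)) = g j - g d"
  using assms
proof (induction d rule: dec_induct)
  case base
  have "\<forall>k\<in>{1..j}. (g (k-1) - g k) * (if j+1 \<le> k then 1 else 0) = 0" by auto
  then show ?case by simp
next
  case (step n)
  have "{1..Suc n} = insert (Suc n) {1..n}" by auto
  then show ?case using step by simp
qed

lemma key_sum: fixes g :: "nat \<Rightarrow> real"
  assumes "1 \<le> j" "j \<le> d" "g d = 0"
  shows "(\<Sum>k\<in>{1..d}. (g (k-1) - g k) * ((if j+1 \<le> k then 1 else 0) + \<alpha> * (if k = j then 1 else 0)))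
     = \<alpha> * g (j-1) + (1-\<alpha>) * g j"
proof -
  have "(\<Sum>k\<in>{1..d}. (g (k-1) - g k) * ((if j+1 \<le> k then 1 else 0) + \<alpha> * (if k = j then 1 else 0)))
    = (\<Sum>k\<in>{1..d}. (g (k-1) - g k) * (if j+1 \<le> k then 1 else 0)) +
      (\<Sum>k\<in>{1..d}. (if k = j then \<alpha> * (g (k-1) - g k) else 0))"
    by (subst sum.distrib[symmetric], rule sum.cong) auto
  also have "\<dots> = (g j - g d) + \<alpha> * (g (j-1) - g j)"
    using tele[OF assms(2)] assms by (simp add: sum.delta)
  finally show ?thesis using assms by (simp add: algebra_simps)
qed


lemma ebas_nth:
  assumes "bij_betw b {1..d+1} (UNIV :: 'n::finite set)" "i \<in> {1..d+1}" "j \<in> {1..d+1}"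
  shows "(ebas b i :: real^'n) $ b j = (if i = j then 1 else 0)"
proof -
  have "inj_on b {1..d+1}" using assms(1) bij_betw_def by blast
  then have "b i = b j \<longleftrightarrow> i = j" using assms(2,3) by (meson inj_on_eq_iff)
  then show ?thesis unfolding ebas_def axis_def by auto
qed

lemma vert_nth:
  assumes "bij_betw b {1..d+1} (UNIV :: 'n::finite set)" "1 \<le> k" "k \<le> d" "m \<in> {1..d+1}"
  shows "((\<Sum>i\<in>{2..k}. ebas b i) + \<alpha> *\<^sub>R ebas b (k + 1) :: real^'n) $ b m
     = (if 2 \<le> m \<and> m \<le> k then 1 else 0) + \<alpha> * (if m = k+1 then 1 else 0)"
proof -
  have "(\<Sum>i\<in>{2..k}. (ebas b i :: real^'n) $ b m) = (\<Sum>i\<in>{2..k}. if i = m then 1 else 0)"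
    by (rule sum.cong) (use assms in \<open>auto simp: ebas_nth[OF assms(1)]\<close>)
  also have "\<dots> = (if 2 \<le> m \<and> m \<le> k then 1 else 0)" by (simp add: sum.delta')
  finally show ?thesis using assms by (simp add: ebas_nth[OF assms(1)])
qed

definition pt :: "(nat \<Rightarrow> 'n::finite) \<Rightarrow> nat \<Rightarrow> real list \<Rightarrow> real^'n" where
  "pt b d as = (\<Sum>m\<in>{2..d+1}. tp as (m-1) *\<^sub>R ebas b m)"

lemma pt_nth:
  assumes "bij_betw b {1..d+1} (UNIV :: 'n::finite set)" "m \<in> {1..d+1}"
  shows "(pt b d as :: real^'n) $ b m = (if 2 \<le> m then tp as (m-1) else 0)"
proof -
  have "(pt b d as :: real^'n) $ b m = (\<Sum>i\<in>{2..d+1}. if i = m then tp as (i-1) else 0)"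
    unfolding pt_def sum_component
    by (rule sum.cong) (use assms in \<open>auto simp: ebas_nth[OF assms(1)]\<close>)
  also have "\<dots> = (if 2 \<le> m then tp as (m-1) else 0)" using assms by (simp add: sum.delta')
  finally show ?thesis .
qed

lemma pt_cube:
  assumes "bij_betw b {1..d+1} (UNIV :: 'n::finite set)" "\<forall>a\<in>set as. 0 \<le> a \<and> a \<le> 1"
  shows "(pt b d as :: real^'n) \<in> cube b d"
  unfolding cube_def using pt_nth[OF assms(1)] tp_bounds[OF assms(2)] by auto

lemma pt_simp:
  assumes bb: "bij_betw b {1..d+1} (UNIV :: 'n::finite set)" and "d \<ge> 1"
    and as: "\<forall>a\<in>set as. 0 \<le> a \<and> a \<le> 1" and len: "length as = d" and al: "\<alpha> \<in> set as"
  shows "(pt b d as :: real^'n) \<in> Ssimp b d \<alpha>"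
proof -
  define r where "r = remove1 \<alpha> as"
  define g where "g j = tp r j" for j
  have lr: "length r = d - 1" using len al unfolding r_def by (simp add: length_remove1)
  have rs: "\<forall>a\<in>set r. 0 \<le> a \<and> a \<le> 1" using as unfolding r_def by (meson notin_set_remove1)
  have gd: "g d = 0" unfolding g_def using tp_big[of r d] lr \<open>d \<ge> 1\<close> by simp
  define v where "v k = ((\<Sum>i\<in>{2..k}. ebas b i) + \<alpha> *\<^sub>R ebas b (k + 1) :: real^'n)" for k
  define lam where "lam k = g (k-1) - g k" for k
  have "(\<Sum>k\<in>{1..d}. lam k *\<^sub>R v k) \<in> Ssimp b d \<alpha>"
    unfolding Ssimp_def
  proof (rule convex_sum)
    show "sum lam {1..d} = 1"
    proof -
      have "sum lam {1..d} = (\<Sum>k\<in>{1..d}. (g (k-1) - g k) * (if 0+1 \<le> k then 1 else 0))"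
        unfolding lam_def by (rule sum.cong) auto
      also have "\<dots> = g 0 - g d" by (rule tele) simp
      finally show ?thesis using gd unfolding g_def by simp
    qed
    show "0 \<le> lam i" if "i \<in> {1..d}" for i
      using that tp_mono[OF rs, of "i-1"] unfolding lam_def g_def by (cases i) auto
    show "v i \<in> convex hull {(\<Sum>i\<in>{2..k}. ebas b i) + \<alpha> *\<^sub>R ebas b (k + 1) | k. 1 \<le> k \<and> k \<le> d}"
      if "i \<in> {1..d}" for i
      by (rule hull_inc) (use that in \<open>auto simp: v_def\<close>)
  qed (auto simp: convex_convex_hull)
  moreover have "(\<Sum>k\<in>{1..d}. lam k *\<^sub>R v k) = pt b d as"
  proof (subst vec_eq_iff, intro allI)
    fix i :: 'n
    obtain m where m: "m \<in> {1..d+1}" "i = b m" using bb by (metis bij_betw_inv_into_right bij_betw_inv_into UNIV_I bij_betwE)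
    have "(\<Sum>k\<in>{1..d}. lam k *\<^sub>R v k) $ b m = (\<Sum>k\<in>{1..d}. lam k * ((if 2 \<le> m \<and> m \<le> k then 1 else 0) + \<alpha> * (if m = k+1 then 1 else 0)))"
    proof (unfold sum_component, rule sum.cong)
      fix k assume "k \<in> {1..d}"
      then have "v k $ b m = (if 2 \<le> m \<and> m \<le> k then 1 else 0) + \<alpha> * (if m = k+1 then 1 else 0)"
        unfolding v_def using vert_nth[OF bb _ _ m(1)] by auto
      then show "(lam k *\<^sub>R v k) $ b m = lam k * ((if 2 \<le> m \<and> m \<le> k then 1 else 0) + \<alpha> * (if m = k+1 then 1 else 0))"
        by simp
    qed simp
    also have "\<dots> = pt b d as $ b m"
    proof (cases "m = 1")
      case True then show ?thesis using pt_nth[OF bb m(1)] by simp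
    next
      case False
      then obtain j where j: "m = j + 1" "1 \<le> j" "j \<le> d" using m(1) by (cases m) auto
      have "(\<Sum>k\<in>{1..d}. lam k * ((if 2 \<le> m \<and> m \<le> k then 1 else 0) + \<alpha> * (if m = k+1 then 1 else 0)))
          = (\<Sum>k\<in>{1..d}. (g (k-1) - g k) * ((if j+1 \<le> k then 1 else 0) + \<alpha> * (if k = j then 1 else 0)))"
        unfolding lam_def by (rule sum.cong) (use j in auto)
      also have "\<dots> = \<alpha> * g (j-1) + (1-\<alpha>) * g j" by (rule key_sum) (use j gd in auto)
      also have "\<dots> = tp as j"
        using tp_remove[OF al, of "j-1"] j unfolding g_def r_def by (cases j) auto
      moreover have "pt b d as $ b m = tp as j" using pt_nth[OF bb m(1)] j by simp
      ultimately show ?thesis by simp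
    qed
    finally show "(\<Sum>k\<in>{1..d}. lam k *\<^sub>R v k) $ i = pt b d as $ i" using m by simp
  qed
  ultimately show ?thesis by simp
qed


lemma Aset_ray: "real n \<le> t \<Longrightarrow> t *\<^sub>R ebas b 1 \<in> Aset b d n"
  unfolding Aset_def Iray_def by (rule hull_inc) auto

lemma Ssimp_Aset: "Ssimp b d (1 / real n) \<subseteq> Aset b d n"
  unfolding Aset_def by (meson hull_subset le_supI1 subset_trans sup_ge1 order_refl)

lemma Aset_not:
  assumes bb: "bij_betw b {1..d+1} (UNIV :: 'n::finite set)" and d: "d \<ge> 1" and nm: "n < m"
  shows "(real n *\<^sub>R ebas b 1 :: real^'n) \<notin> Aset b d m"
proof
  define T where "T = {x :: real^'n. real m \<le> x $ b 1 + (real m)^2 * x $ b 2}"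
  have cT: "convex T" unfolding T_def convex_def
  proof (intro allI impI ballI, clarify)
    fix x y :: "real^'n" and u v :: real
    assume x: "real m \<le> x $ b 1 + (real m)^2 * x $ b 2" and y: "real m \<le> y $ b 1 + (real m)^2 * y $ b 2"
      and u: "0 \<le> u" and v: "0 \<le> v" and uv: "u + v = 1"
    have "u * real m + v * real m \<le> u * (x $ b 1 + (real m)^2 * x $ b 2) + v * (y $ b 1 + (real m)^2 * y $ b 2)"
      by (intro add_mono mult_left_mono) (use x y u v in auto)
    moreover have "u * real m + v * real m = real m" using uv by (metis distrib_right mult_1)
    ultimately show "real m \<le> (u *\<^sub>R x + v *\<^sub>R y) $ b 1 + (real m)^2 * (u *\<^sub>R x + v *\<^sub>R y) $ b 2"
      using uv by (simp add: algebra_simps)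
  qed
  have m0: "real m > 0" using nm by simp
  have in1: "1 \<in> {1..d+1}" and in2: "2 \<in> {1..d+1}" using d by auto
  have "Ssimp b d (1 / real m) \<subseteq> T"
    unfolding Ssimp_def
  proof (rule hull_minimal[where S=convex, OF _ cT], clarify)
    fix k assume k: "1 \<le> k" "k \<le> d"
    let ?v = "(\<Sum>i\<in>{2..k}. ebas b i) + (1 / real m) *\<^sub>R ebas b (k + 1) :: real^'n"
    have v1: "?v $ b 1 = 0" using vert_nth[OF bb k in1, of "1 / real m"] k by simp
    have v2: "?v $ b 2 = (if 2 \<le> k then 1 else 0) + (1/real m) * (if k = 1 then 1 else 0)"
      using vert_nth[OF bb k in2, of "1 / real m"] k by simp
    have "1 / real m \<le> ?v $ b 2"
      unfolding v2 using m0 nm k by (auto simp: field_simps)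
    then have "(real m)^2 * (1 / real m) \<le> (real m)^2 * ?v $ b 2"
      by (intro mult_left_mono) auto
    then show "?v \<in> T" unfolding T_def using v1 m0 by (simp add: power2_eq_square)
  qed
  moreover have "Iray b m \<subseteq> T"
    unfolding Iray_def T_def using ebas_nth[OF bb in1 in1] ebas_nth[OF bb in1 in2] by auto
  ultimately have "Aset b d m \<subseteq> T" unfolding Aset_def by (intro hull_minimal cT) auto
  moreover assume "(real n *\<^sub>R ebas b 1 :: real^'n) \<in> Aset b d m"
  ultimately show False
    unfolding T_def using ebas_nth[OF bb in1 in1] ebas_nth[OF bb in1 in2] nm by auto
qed

lemma Aset_inj:
  assumes bb: "bij_betw b {1..d+1} (UNIV :: 'n::finite set)" and d: "d \<ge> 1"
  shows "inj (Aset b d :: nat \<Rightarrow> (real^'n) set)"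
proof (rule injI, rule ccontr)
  fix n m :: nat assume eq: "(Aset b d n :: (real^'n) set) = Aset b d m" and ne: "n \<noteq> m"
  show False
  proof (cases "n < m")
    case True
    then show ?thesis using Aset_not[OF bb d True] Aset_ray[of n "real n" b d] eq by auto
  next
    case False
    then have "m < n" using ne by simp
    then show ?thesis using Aset_not[OF bb d \<open>m < n\<close>] Aset_ray[of m "real m" b d] eq by auto
  qed
qed


lemma Afam_img: "Afam b d = Aset b d ` {n. 2 \<le> n}"
  unfolding Afam_def by auto

theorem lemma2p4:
  fixes b :: "nat \<Rightarrow> 'n::finite" and d k :: nat and B :: "(real ^ 'n) set set"
  assumes "CARD('n) = d + 1" and "d \<ge> 1"
    and "bij_betw b {1..d+1} (UNIV :: 'n set)"
    and "\<forall>X\<in>B. bounded X \<and> convex X \<and> cube b d \<subseteq> X"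
  shows "pq_property (d + 1 + 2 * k) (d + 1 + k) (Afam b d \<union> B)"
proof -
  note bb = assms(3) and d = assms(2)
  let ?p = "d + 1 + 2 * k" and ?q = "d + 1 + k"
  have inj: "inj (Aset b d :: nat \<Rightarrow> (real^'n) set)" by (rule Aset_inj[OF bb d])
  have ex: "\<exists>G\<subseteq>Afam b d \<union> B. finite G \<and> card G = ?p"
  proof (intro exI conjI)
    show "Aset b d ` {2..?p+1} \<subseteq> Afam b d \<union> B" unfolding Afam_img by auto
    show "finite (Aset b d ` {2..?p+1})" by simp
    show "card (Aset b d ` {2..?p+1}) = ?p"
      using card_image[OF inj_on_subset[OF inj subset_UNIV]] by simp
  qed
  have main: "\<exists>H\<subseteq>G. card H = ?q \<and> \<Inter>H \<noteq> {}"
    if G: "G \<subseteq> Afam b d \<union> B" "finite G" "card G = ?p" for G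
  proof -
    define GA where "GA = G \<inter> Afam b d"
    define GB where "GB = G - Afam b d"
    have GBB: "GB \<subseteq> B" using G(1) unfolding GB_def by auto
    have fA: "finite GA" and fB: "finite GB" using G(2) unfolding GA_def GB_def by auto
    have cardG: "card GA + card GB = ?p"
    proof -
      have "G = GA \<union> GB" "GA \<inter> GB = {}" unfolding GA_def GB_def by auto
      then show ?thesis using card_Un_disjoint[OF fA fB] G(3) by simp
    qed
    have cubeB: "x \<in> X" if "X \<in> GB" "x \<in> cube b d" for X x
      using assms(4) GBB that by blast
    have decomp: "\<exists>N. N \<subseteq> {n. 2 \<le> n} \<and> finite N \<and> card N = card H' \<and> H' = Aset b d ` N"
      if "H' \<subseteq> GA" for H'
    proof -
      have "H' \<subseteq> Aset b d ` {n. 2 \<le> n}" using that unfolding GA_def Afam_img by auto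
      then obtain N where N: "N \<subseteq> {n. 2 \<le> n}" "inj_on (Aset b d) N" "H' = Aset b d ` N"
        unfolding subset_image_inj by blast
      have "finite H'" using that fA finite_subset by blast
      then have "finite N" using N finite_imageD by blast
      moreover have "card H' = card N" using N(3) card_image[OF N(2)] by simp
      ultimately show ?thesis using N(1,3) by auto
    qed
    show ?thesis
    proof (cases "?q \<le> card GB")
      case True
      then obtain H where H: "H \<subseteq> GB" "card H = ?q" by (meson obtain_subset_with_card_n)
      have "0 \<in> cube b d" unfolding cube_def by simp
      then have "0 \<in> \<Inter>H" using H cubeB by blast
      then show ?thesis using H unfolding GB_def by blast
    next
      case nB: False
      show ?thesis
      proof (cases "?q \<le> card GA")
        case True
        then obtain H where H: "H \<subseteq> GA" "card H = ?q" by (meson obtain_subset_with_card_n)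
        obtain N where N: "N \<subseteq> {n. 2 \<le> n}" "finite N" "H = Aset b d ` N"
          using decomp[OF H(1)] by blast
        have "real (\<Sum>N) *\<^sub>R ebas b 1 \<in> Aset b d n" if "n \<in> N" for n
          by (rule Aset_ray) (use member_le_sum[OF that _ N(2), of id] in \<open>simp only: of_nat_le_iff id_def\<close>)
        then have "real (\<Sum>N) *\<^sub>R ebas b 1 \<in> \<Inter>H" using N(3) by auto
        then show ?thesis using H unfolding GA_def by blast
      next
        case False
        then have cB: "k + 1 \<le> card GB" using cardG by linarith
        have "?q - card GB \<le> card GA" using cardG nB by linarith
        then obtain H' where H': "H' \<subseteq> GA" "card H' = ?q - card GB" "finite H'"
          by (meson obtain_subset_with_card_n)
        obtain N where N: "N \<subseteq> {n. 2 \<le> n}" "finite N" "card N = card H'" "H' = Aset b d ` N"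
          using decomp[OF H'(1)] by blast
        have cN: "card N \<le> d" using N(3) H'(2) cB by linarith
        define as where "as = map (\<lambda>n. 1 / real n) (sorted_list_of_set N) @ replicate (d - card N) (1/2)"
        have las: "length as = d" unfolding as_def using cN by simp
        have ras: "\<forall>a\<in>set as. 0 \<le> a \<and> a \<le> 1" unfolding as_def using N(1,2) by auto
        have mem: "1 / real n \<in> set as" if "n \<in> N" for n
          unfolding as_def using that N(2) by auto
        define P where "P = (pt b d as :: real^'n)"
        have Pc: "P \<in> cube b d" unfolding P_def by (rule pt_cube[OF bb ras])
        have PA: "P \<in> Aset b d n" if "n \<in> N" for n
          using pt_simp[OF bb d ras las mem[OF that]] Ssimp_Aset unfolding P_def by blast
        define H where "H = GB \<union> H'"
        have disj: "GB \<inter> H' = {}" using H'(1) unfolding GA_def GB_def by auto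
        have "card H = ?q" unfolding H_def using card_Un_disjoint[OF fB H'(3) disj] H'(2) nB by simp
        moreover have "H \<subseteq> G" unfolding H_def GA_def GB_def using H'(1) GA_def by auto
        moreover have "P \<in> \<Inter>H" unfolding H_def using Pc cubeB PA N(4) by auto
        ultimately show ?thesis by blast
      qed
    qed
  qed
  show ?thesis unfolding pq_property_def using ex main by blast
qed

end
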